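(* In the setting described in the context, suppose $\tilde b\preceq_{hr}\tilde k$, meaning that $p\mapsto\tilde b(p)/\tilde k(p)$ is non-decreasing on $(0,1)$. Here $\tilde k(p)=(1+\theta)p+k(p)$ and $\tilde b(p)=1-b(1-p)$. Suppose also that $u$ is the identity function on $\mathbb{R}$. Then there exists $m\in[0,\infty]$ such that the indemnity $I^*(x)=\min(x,m)$ maximizes $I\mapsto\rho_b(u(w-X+I(X)-\pi(I(X))))$ over $\mathcal{I}_c$.
   Context: Let $X\ge0$ be a random variable with $\mathbb{E}X<\infty$, distribution function $F_X$ and survival function $S_X$. $\mathcal{I}_c$ is the set of functions $I:[0,\infty)\to[0,\infty)$ with $0\le I(x)\le x$ and $0\le I(x)-I(y)\le x-y$ for $0\le y\le x$. For $j:[0,1]\to\mathbb{R}$ and $Y$ essentially bounded below, set $$\rho_j(Y)=\int_{-\infty}^0 \big(j(S_Y(t))-j(1)\big)\,dt+\int_0^\infty j(S_Y(t))\,dt.$$ The premium is $\pi(Y)=(1+\theta)\mathbb{E}Y+\rho_k(Y)$, with $\theta>-1$ and $k:[0,1]\to[0,\infty)$ continuous and concave with $k(0)=k(1)=0$. The buyer has wealth $w$. $b:[0,1]\to[0,1]$ is continuously differentiable, strictly increasing and convex, with $b(0)=0$ and $b(1)=1$. All relevant quantities are assumed finite. *)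

theory Defs
  imports "HOL-Probability.Probability"
begin

definition surv :: "'a measure \<Rightarrow> ('a \<Rightarrow> real) \<Rightarrow> real \<Rightarrow> real" where
  "surv M Y t = measure M {\<omega> \<in> space M. Y \<omega> > t}"

definition rho :: "(real \<Rightarrow> real) \<Rightarrow> 'a measure \<Rightarrow> ('a \<Rightarrow> real) \<Rightarrow> real" where
  "rho j M Y = (LBINT t:{..0}. j (surv M Y t) - j 1) + (LBINT t:{0<..}. j (surv M Y t))"

definition premium :: "real \<Rightarrow> (real \<Rightarrow> real) \<Rightarrow> 'a measure \<Rightarrow> ('a \<Rightarrow> real) \<Rightarrow> real" where
  "premium \<theta> k M Y = (1 + \<theta>) * (\<integral>\<omega>. Y \<omega> \<partial>M) + rho k M Y"

text \<open>Admissible indemnities I_c (only values on [0,oo) matter).\<close>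
definition Ic :: "(real \<Rightarrow> real) set" where
  "Ic = {I. (\<forall>x\<ge>0. 0 \<le> I x \<and> I x \<le> x) \<and>
            (\<forall>x y. 0 \<le> y \<and> y \<le> x \<longrightarrow> 0 \<le> I x - I y \<and> I x - I y \<le> x - y)}"

text \<open>Final wealth of the buyer with indemnity I (u = identity).\<close>
definition wealth :: "real \<Rightarrow> real \<Rightarrow> (real \<Rightarrow> real) \<Rightarrow> 'a measure \<Rightarrow> ('a \<Rightarrow> real)
    \<Rightarrow> (real \<Rightarrow> real) \<Rightarrow> 'a \<Rightarrow> real" where
  "wealth w \<theta> k M X I = (\<lambda>\<omega>. w - X \<omega> + I (X \<omega>) - premium \<theta> k M (\<lambda>\<omega>'. I (X \<omega>')))"

definition layer :: "ereal \<Rightarrow> real \<Rightarrow> real" where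
  "layer m x = real_of_ereal (min (ereal x) m)"

end

theory Submission
  imports Defs
begin

definition tau :: "(real \<Rightarrow> real) \<Rightarrow> real \<Rightarrow> real" where
  "tau \<phi> s = Sup {t. 0 \<le> t \<and> \<phi> t \<le> s}"

definition Uset :: "(real \<Rightarrow> real) \<Rightarrow> real set" where
  "Uset \<phi> = {s. 0 < s \<and> (\<exists>x\<ge>0. s < \<phi> x)}"

lemma tau_props:
  assumes mono: "mono_on {0..} \<phi>" and cont: "continuous_on {0..} \<phi>"
    and z: "\<phi> 0 = 0" and s: "s \<in> Uset \<phi>"
  shows "0 \<le> tau \<phi> s" "\<phi> (tau \<phi> s) \<le> s" "\<And>t. 0 \<le> t \<Longrightarrow> (tau \<phi> s < t \<longleftrightarrow> s < \<phi> t)"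
proof -
  let ?A = "{t. 0 \<le> t \<and> \<phi> t \<le> s}"
  from s obtain x where x: "x \<ge> 0" "s < \<phi> x" "0 < s" unfolding Uset_def by auto
  have ne: "?A \<noteq> {}" using z x by (auto intro!: exI[of _ 0])
  have bdd: "bdd_above ?A"
  proof (rule bdd_aboveI[of _ x])
    fix t assume "t \<in> ?A"
    then show "t \<le> x" using x mono by (smt (verit) atLeast_iff mem_Collect_eq mono_onD)
  qed
  have "?A = {0..} \<inter> \<phi> -` {..s}" by auto
  then have cl: "closed ?A" using continuous_closed_preimage[OF cont] by auto
  have mem: "tau \<phi> s \<in> ?A" unfolding tau_def using closed_contains_Sup[OF ne bdd cl] .
  then show "0 \<le> tau \<phi> s" "\<phi> (tau \<phi> s) \<le> s" by auto
  fix t :: real assume t: "0 \<le> t"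
  show "tau \<phi> s < t \<longleftrightarrow> s < \<phi> t"
  proof
    assume "tau \<phi> s < t"
    then have "t \<notin> ?A" using cSup_upper[OF _ bdd, of t] unfolding tau_def by force
    then show "s < \<phi> t" using t by auto
  next
    assume "s < \<phi> t"
    show "tau \<phi> s < t"
    proof (rule ccontr)
      assume "\<not> tau \<phi> s < t"
      then have "\<phi> t \<le> \<phi> (tau \<phi> s)" using mono t mem by (auto intro: mono_onD)
      then show False using mem \<open>s < \<phi> t\<close> by auto
    qed
  qed
qed

lemma Uset_open: "continuous_on {0..} \<phi> \<Longrightarrow> open (Uset \<phi>)"
proof -
  assume c: "continuous_on {0..} \<phi>"
  have "Uset \<phi> = (\<Union>x\<in>{0..}. {0<..<\<phi> x})" unfolding Uset_def by auto
  then show ?thesis by (metis open_UN open_greaterThanLessThan)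
qed

lemma Uset_pos: "s \<in> Uset \<phi> \<Longrightarrow> 0 < s" unfolding Uset_def by auto

lemma lt_set:
  assumes mono: "mono_on {0..} \<phi>" and cont: "continuous_on {0..} \<phi>" and z: "\<phi> 0 = 0"
  shows "{s \<in> Uset \<phi>. tau \<phi> s < t} = {0<..<\<phi> (max t 0)}"
proof (cases "t \<ge> 0")
  case True
  have "s \<in> Uset \<phi> \<and> tau \<phi> s < t \<longleftrightarrow> 0 < s \<and> s < \<phi> t" for s
  proof
    assume "s \<in> Uset \<phi> \<and> tau \<phi> s < t"
    then show "0 < s \<and> s < \<phi> t" using tau_props(3)[OF mono cont z _ True] Uset_pos by blast
  next
    assume a: "0 < s \<and> s < \<phi> t"
    then have "s \<in> Uset \<phi>" unfolding Uset_def using True by auto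
    then show "s \<in> Uset \<phi> \<and> tau \<phi> s < t" using tau_props(3)[OF mono cont z _ True] a by blast
  qed
  note eq = this
  have mt: "max t 0 = t" using True by simp
  show ?thesis
  proof (rule set_eqI)
    fix s show "s \<in> {s \<in> Uset \<phi>. tau \<phi> s < t} \<longleftrightarrow> s \<in> {0<..<\<phi> (max t 0)}"
      using eq[of s] unfolding mt by simp
  qed
next
  case False
  have "\<not> (s \<in> Uset \<phi> \<and> tau \<phi> s < t)" for s using tau_props(1)[OF mono cont z, of s] False by auto
  then have "{s \<in> Uset \<phi>. tau \<phi> s < t} = {}" by blast
  moreover have "{0<..<\<phi> (max t 0)} = {}" using False z by simp
  ultimately show ?thesis by simp
qed

lemma phi_max_nonneg:
  fixes \<phi> :: "real \<Rightarrow> real"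
  assumes mono: "mono_on {0..} \<phi>" and z: "\<phi> 0 = 0"
  shows "0 \<le> \<phi> (max t 0)"
  using mono_onD[OF mono, of 0 "max t 0"] z by (simp add: le_max_iff_disj)

definition Tmap :: "(real \<Rightarrow> real) \<Rightarrow> real \<Rightarrow> real" where
  "Tmap I s = (if s \<in> Uset I then tau I s else if - s \<in> Uset (\<lambda>x. x - I x) then tau (\<lambda>x. x - I x) (- s) else 0)"

definition Vset :: "(real \<Rightarrow> real) \<Rightarrow> real set" where
  "Vset I = Uset I \<union> {s. - s \<in> Uset (\<lambda>x. x - I x)}"

locale split_fun =
  fixes I :: "real \<Rightarrow> real"
  assumes monoI: "mono_on {0..} I" and monoR: "mono_on {0..} (\<lambda>x. x - I x)"
    and contI: "continuous_on {0..} I" and I0: "I 0 = 0"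
begin

abbreviation "R \<equiv> (\<lambda>x. x - I x)"

lemma contR: "continuous_on {0..} R"
  by (intro continuous_intros contI)

lemma R0: "R 0 = 0" using I0 by simp

lemma lt_iff:
  fixes \<phi> :: "real \<Rightarrow> real"
  assumes mono: "mono_on {0..} \<phi>" and cont: "continuous_on {0..} \<phi>" and z: "\<phi> 0 = 0"
  shows "s \<in> Uset \<phi> \<and> tau \<phi> s < t \<longleftrightarrow> 0 < s \<and> s < \<phi> (max t 0)"
proof -
  have "s \<in> {s \<in> Uset \<phi>. tau \<phi> s < t} \<longleftrightarrow> s \<in> {0<..<\<phi> (max t 0)}"
    unfolding lt_set[OF mono cont z] ..
  then show ?thesis by simp
qed

lemma V_lt_iff: "s \<in> Vset I \<and> Tmap I s < a \<longleftrightarrow> (0 < s \<and> s < I (max a 0)) \<or> (0 < - s \<and> - s < R (max a 0))"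
proof -
  have "s \<in> Vset I \<and> Tmap I s < a \<longleftrightarrow> (s \<in> Uset I \<and> tau I s < a) \<or> (-s \<in> Uset R \<and> tau R (-s) < a)"
  proof (cases "s \<in> Uset I")
    case True
    then have "\<not> (-s \<in> Uset R)" using Uset_pos[of s I] Uset_pos[of "-s" R] by linarith
    then show ?thesis using True by (simp add: Vset_def Tmap_def)
  next
    case False
    then show ?thesis by (simp add: Vset_def Tmap_def)
  qed
  also have "\<dots> \<longleftrightarrow> (0 < s \<and> s < I (max a 0)) \<or> (0 < - s \<and> - s < R (max a 0))"
    using lt_iff[OF monoI contI I0, of s a] lt_iff[OF monoR contR R0, of "-s" a] by simp
  finally show ?thesis .
qed

lemma V_lt: "Vset I \<inter> {s. Tmap I s < a} = {0<..<I (max a 0)} \<union> {- R (max a 0)<..<0}"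
proof (rule set_eqI)
  fix s
  show "s \<in> Vset I \<inter> {s. Tmap I s < a} \<longleftrightarrow> s \<in> {0<..<I (max a 0)} \<union> {- R (max a 0)<..<0}"
    using V_lt_iff[of s a] by (simp only: Int_iff mem_Collect_eq Un_iff greaterThanLessThan_iff) linarith
qed

lemma T_lt: "{s. Tmap I s < a} = {0<..<I (max a 0)} \<union> {- R (max a 0)<..<0} \<union> {s. s \<notin> Vset I \<and> 0 < a}"
proof (rule set_eqI)
  fix s
  have z: "s \<notin> Vset I \<Longrightarrow> Tmap I s = 0" unfolding Vset_def Tmap_def by auto
  show "s \<in> {s. Tmap I s < a} \<longleftrightarrow> s \<in> {0<..<I (max a 0)} \<union> {- R (max a 0)<..<0} \<union> {s. s \<notin> Vset I \<and> 0 < a}"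
  proof (cases "s \<in> Vset I")
    case True
    then show ?thesis using V_lt_iff[of s a]
      by (simp only: Int_iff mem_Collect_eq Un_iff greaterThanLessThan_iff simp_thms) linarith
  next
    case False
    then show ?thesis using V_lt_iff[of s a] z
      by (simp only: Int_iff mem_Collect_eq Un_iff greaterThanLessThan_iff simp_thms) linarith
  qed
qed

lemma V_open: "open (Vset I)"
proof -
  have "Vset I = Uset I \<union> uminus -` Uset R" unfolding Vset_def by auto
  moreover have "open (uminus -` Uset R)"
    by (rule open_vimage[OF Uset_open[OF contR]]) (intro continuous_intros)
  ultimately show ?thesis using Uset_open[OF contI] by auto
qed

lemma V_borel[measurable]: "Vset I \<in> sets borel" using V_open by auto

lemma T_meas[measurable]: "Tmap I \<in> borel_measurable borel"
proof (subst borel_measurable_iff_less, intro allI)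
  fix a
  have "{w \<in> space borel. Tmap I w < a} = {0<..<I (max a 0)} \<union> {- R (max a 0)<..<0} \<union> {s. s \<notin> Vset I \<and> 0 < a}"
    using T_lt by simp
  also have "\<dots> \<in> sets borel" by (cases "0 < a") auto
  finally show "{w \<in> space borel. Tmap I w < a} \<in> sets borel" .
qed

end

lemma emeasure_density_ind:
  assumes [measurable]: "S \<in> sets borel" "A \<in> sets borel"
  shows "emeasure (density lborel (indicator S)) A = emeasure lborel (S \<inter> A)"
proof -
  have "emeasure (density lborel (indicator S)) A = (\<integral>\<^sup>+ x. indicator S x * indicator A x \<partial>lborel)"
    by (rule emeasure_density) auto
  also have "\<dots> = (\<integral>\<^sup>+ x. indicator (S \<inter> A) x \<partial>lborel)"
    by (simp add: indicator_inter_arith)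
  also have "\<dots> = emeasure lborel (S \<inter> A)" by (rule nn_integral_indicator) auto
  finally show ?thesis .
qed

context split_fun begin

definition "nu = distr (density lborel (indicator (Vset I))) borel (Tmap I)"

lemma V_lt_meas: "emeasure lborel (Vset I \<inter> {s. Tmap I s < a}) = ennreal (max a 0)"
proof -
  let ?m = "max a 0"
  have i0: "0 \<le> I ?m" by (rule phi_max_nonneg[OF monoI I0])
  have r0: "0 \<le> R ?m" by (rule phi_max_nonneg[OF monoR R0])
  have "emeasure lborel (Vset I \<inter> {s. Tmap I s < a}) = emeasure lborel ({0<..<I ?m} \<union> {- R ?m<..<0})"
    by (simp only: V_lt)
  also have "\<dots> = emeasure lborel {0<..<I ?m} + emeasure lborel {- R ?m<..<0}"
    by (rule plus_emeasure[symmetric]) auto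
  also have "\<dots> = ennreal (I ?m) + ennreal (R ?m)" using i0 r0 by simp
  also have "\<dots> = ennreal ?m" using i0 r0 by (simp flip: ennreal_plus)
  finally show ?thesis .
qed

lemma nu_Ico: "emeasure nu {a..<b} = emeasure (density lborel (indicator {0..})) {a..<b}"
proof (cases "a \<le> b")
  case False
  then show ?thesis by simp
next
  case True
  have "emeasure nu {a..<b} = emeasure (density lborel (indicator (Vset I))) (Tmap I -` {a..<b})"
    unfolding nu_def by (subst emeasure_distr) auto
  also have "\<dots> = emeasure lborel (Vset I \<inter> Tmap I -` {a..<b})"
  proof -
    have "Tmap I -` {a..<b} \<in> sets borel" using measurable_sets[OF T_meas, of "{a..<b}"] by simp
    then show ?thesis by (intro emeasure_density_ind) auto
  qed
  also have "Vset I \<inter> Tmap I -` {a..<b} = (Vset I \<inter> {s. Tmap I s < b}) - (Vset I \<inter> {s. Tmap I s < a})"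
    by auto
  also have "emeasure lborel \<dots> = emeasure lborel (Vset I \<inter> {s. Tmap I s < b}) - emeasure lborel (Vset I \<inter> {s. Tmap I s < a})"
    using True by (intro emeasure_Diff) (auto simp: V_lt_meas)
  also have "\<dots> = ennreal (max b 0 - max a 0)"
    unfolding V_lt_meas by (rule ennreal_minus[OF max.cobounded2])
  also have "\<dots> = emeasure lborel ({0..} \<inter> {a..<b})"
  proof -
    have "{0..} \<inter> {a..<b} = {max a 0..<max b 0}" by auto
    then show ?thesis using True by simp
  qed
  also have "\<dots> = emeasure (density lborel (indicator {0..})) {a..<b}"
    by (rule emeasure_density_ind[symmetric]) auto
  finally show ?thesis .
qed

lemma nu_eq: "density lborel (indicator {0..}) = nu"
proof (rule measure_eqI_generator_eq[where E="range (\<lambda>(a, b). {a..<b::real})" and \<Omega>=UNIV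
      and A="\<lambda>i. {- real i..<real i}"])
  show "Int_stable (range (\<lambda>(a, b). {a..<b::real}))"
  proof (rule Int_stableI)
    fix A B assume "A \<in> range (\<lambda>(a, b). {a..<b::real})" "B \<in> range (\<lambda>(a, b). {a..<b::real})"
    then obtain a b c d where "A = {a..<b}" "B = {c..<d}" by auto
    then have "A \<inter> B = {max a c..<min b d}" by auto
    then show "A \<inter> B \<in> range (\<lambda>(a, b). {a..<b::real})" by (auto intro!: image_eqI[of _ _ "(max a c, min b d)"])
  qed
  show "range (\<lambda>(a, b). {a..<b::real}) \<subseteq> Pow UNIV" by simp
  fix X assume "X \<in> range (\<lambda>(a, b). {a..<b::real})"
  then show "emeasure (density lborel (indicator {0..})) X = emeasure nu X"
    using nu_Ico by auto
next
  show "sets (density lborel (indicator {0..})) = sigma_sets UNIV (range (\<lambda>(a, b). {a..<b::real}))"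
    by (simp add: borel_eq_atLeastLessThan)
  show "sets nu = sigma_sets UNIV (range (\<lambda>(a, b). {a..<b::real}))"
    unfolding nu_def by (simp add: borel_eq_atLeastLessThan)
  show "range (\<lambda>i. {- real i..<real i}) \<subseteq> range (\<lambda>(a, b). {a..<b::real})" by auto
  show "(\<Union>i. {- real i..<real i}) = (UNIV :: real set)"
  proof -
    have "x \<in> (\<Union>i. {- real i..<real i})" for x :: real
    proof -
      obtain n :: nat where "\<bar>x\<bar> < real n" using reals_Archimedean2 by blast
      then show ?thesis by (intro UN_I[of n]) auto
    qed
    then show ?thesis by auto
  qed
  fix i :: nat
  have "emeasure (density lborel (indicator {0..})) {- real i..<real i} = emeasure lborel ({0..} \<inter> {- real i..<real i})"
    by (rule emeasure_density_ind) auto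
  also have "\<dots> \<le> emeasure lborel {- real i..<real i}" by (rule emeasure_mono) auto
  also have "\<dots> < \<infinity>" by simp
  finally show "emeasure (density lborel (indicator {0..})) {- real i..<real i} \<noteq> \<infinity>" by simp
qed

end

context split_fun begin

lemma P1: "f (Tmap I s) * indicator (Vset I) s * indicator {0<..} s = f (tau I s) * indicator (Uset I) s"
  for f :: "real \<Rightarrow> ennreal" by (cases "s \<in> Uset I") (auto simp: Tmap_def Vset_def indicator_def dest: Uset_pos)

lemma P2: "f (Tmap I (-s)) * indicator (Vset I) (-s) * indicator {..<0} (-s) = f (tau R s) * indicator (Uset R) s"
  for f :: "real \<Rightarrow> ennreal" by (cases "s \<in> Uset R") (auto simp: Tmap_def Vset_def indicator_def dest: Uset_pos)

lemma P3: "indicator (Vset I) s * f (Tmap I s) =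
   f (Tmap I s) * indicator (Vset I) s * indicator {0<..} s + f (Tmap I s) * indicator (Vset I) s * indicator {..<0} s"
  for f :: "real \<Rightarrow> ennreal"
proof -
  have "s \<in> Vset I \<Longrightarrow> s \<noteq> 0" unfolding Vset_def using Uset_pos[of s I] Uset_pos[of "-s" R] by auto
  then show ?thesis by (cases "s > 0"; cases "s < 0") (auto simp: indicator_def)
qed

lemma Phi_sum:
  fixes f :: "real \<Rightarrow> ennreal"
  assumes f[measurable]: "f \<in> borel_measurable borel"
  shows "(\<integral>\<^sup>+s. f (tau I s) * indicator (Uset I) s \<partial>lborel) + (\<integral>\<^sup>+s. f (tau R s) * indicator (Uset R) s \<partial>lborel)
       = (\<integral>\<^sup>+t. f t * indicator {0..} t \<partial>lborel)"
proof -
  define h where "h s = f (Tmap I s) * indicator (Vset I) s" for s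
  have h[measurable]: "h \<in> borel_measurable borel" unfolding h_def by measurable
  have "(\<integral>\<^sup>+t. f t * indicator {0..} t \<partial>lborel) = (\<integral>\<^sup>+t. f t \<partial>density lborel (indicator {0..}))"
    by (subst nn_integral_density) (auto simp: mult.commute)
  also have "\<dots> = (\<integral>\<^sup>+t. f t \<partial>nu)" by (simp only: nu_eq)
  also have "\<dots> = (\<integral>\<^sup>+s. f (Tmap I s) \<partial>density lborel (indicator (Vset I)))"
    unfolding nu_def by (subst nn_integral_distr) auto
  also have "\<dots> = (\<integral>\<^sup>+s. indicator (Vset I) s * f (Tmap I s) \<partial>lborel)"
    by (subst nn_integral_density) auto
  also have "\<dots> = (\<integral>\<^sup>+s. h s * indicator {0<..} s + h s * indicator {..<0} s \<partial>lborel)"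
    unfolding h_def by (simp only: P3)
  also have "\<dots> = (\<integral>\<^sup>+s. h s * indicator {0<..} s \<partial>lborel) + (\<integral>\<^sup>+s. h s * indicator {..<0} s \<partial>lborel)"
    by (rule nn_integral_add) auto
  also have "(\<integral>\<^sup>+s. h s * indicator {0<..} s \<partial>lborel) = (\<integral>\<^sup>+s. f (tau I s) * indicator (Uset I) s \<partial>lborel)"
    unfolding h_def by (simp only: P1)
  also have "(\<integral>\<^sup>+s. h s * indicator {..<0} s \<partial>lborel) = (\<integral>\<^sup>+s. f (tau R s) * indicator (Uset R) s \<partial>lborel)"
  proof -
    have "(\<integral>\<^sup>+s. h s * indicator {..<0} s \<partial>lborel) = ennreal \<bar>- 1\<bar> * (\<integral>\<^sup>+s. h (0 + (-1) * s) * indicator {..<0} (0 + (-1) * s) \<partial>lborel)"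
      by (rule nn_integral_real_affine) auto
    also have "\<dots> = (\<integral>\<^sup>+s. h (- s) * indicator {..<0} (- s) \<partial>lborel)" by simp
    also have "\<dots> = (\<integral>\<^sup>+s. f (tau R s) * indicator (Uset R) s \<partial>lborel)"
      unfolding h_def by (simp only: P2)
    finally show ?thesis .
  qed
  finally show ?thesis by simp
qed

end

locale dist_setup =
  fixes \<theta> :: real and k b :: "real \<Rightarrow> real"
  assumes theta: "\<theta> > -1" and kcont: "continuous_on {0..1} k" and knn: "\<forall>p\<in>{0..1}. k p \<ge> 0"
    and k0: "k 0 = 0" and k1: "k 1 = 0"
    and bcont: "continuous_on {0..1} b" and bmono: "strict_mono_on {0..1} b"
    and b0: "b 0 = 0" and b1: "b 1 = 1"
    and hr: "mono_on {0<..<1} (\<lambda>p. (1 - b (1 - p)) / ((1 + \<theta>) * p + k p))"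
begin

definition "kt p = (1 + \<theta>) * p + k p"
definition "bt p = 1 - b (1 - p)"
definition "hh p = bt p - kt p"

lemma kt_pos: "0 < p \<Longrightarrow> p \<le> 1 \<Longrightarrow> 0 < kt p"
  unfolding kt_def using theta knn by (smt (verit, best) atLeastAtMost_iff mult_pos_pos)

lemma kt_nn: "0 \<le> p \<Longrightarrow> p \<le> 1 \<Longrightarrow> 0 \<le> kt p"
  unfolding kt_def using theta knn by (smt (verit, best) atLeastAtMost_iff mult_nonneg_nonneg)

lemma b_le1: "0 \<le> p \<Longrightarrow> p \<le> 1 \<Longrightarrow> b p \<le> 1"
  using bmono b1 by (smt (verit) atLeastAtMost_iff strict_mono_onD)

lemma b_nn: "0 \<le> p \<Longrightarrow> p \<le> 1 \<Longrightarrow> 0 \<le> b p"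
  using bmono b0 by (smt (verit) atLeastAtMost_iff strict_mono_onD)

lemma bt_nn: "0 \<le> p \<Longrightarrow> p \<le> 1 \<Longrightarrow> 0 \<le> bt p"
  unfolding bt_def using b_le1[of "1 - p"] by simp

lemma bt_mono: "0 \<le> p \<Longrightarrow> p \<le> q \<Longrightarrow> q \<le> 1 \<Longrightarrow> bt p \<le> bt q"
  unfolding bt_def using bmono by (smt (verit) atLeastAtMost_iff strict_mono_onD)

lemma kt0: "kt 0 = 0" unfolding kt_def using k0 by simp
lemma bt0: "bt 0 = 0" unfolding bt_def using b1 by simp
lemma bt1: "bt 1 = 1" unfolding bt_def using b0 by simp
lemma hh0: "hh 0 = 0" unfolding hh_def using kt0 bt0 by simp

lemma hh_cont: "continuous_on {0..1} hh"
proof -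
  have "continuous_on {0..1} (\<lambda>p. b (1 - p))"
    by (rule continuous_on_compose2[OF bcont]) (auto intro!: continuous_intros)
  then show ?thesis unfolding hh_def bt_def kt_def
    by (intro continuous_intros kcont)
qed

lemma hh_neg_lt1:
  assumes "0 < q" "q \<le> p" "p < 1" "hh p < 0"
  shows "hh q < 0"
proof -
  have kp: "0 < kt p" and kq: "0 < kt q" using assms kt_pos by auto
  have "bt p / kt p < 1" using assms(4) kp unfolding hh_def by (simp add: divide_less_eq)
  moreover have "bt q / kt q \<le> bt p / kt p"
    using mono_onD[OF hr, of q p] assms unfolding bt_def kt_def by auto
  ultimately have "bt q / kt q < 1" by simp
  then show ?thesis using kq unfolding hh_def by (simp add: divide_less_eq)
qed

lemma hh_neg_mono:
  assumes "0 < q" "q \<le> p" "p \<le> 1" "hh p < 0"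
  shows "hh q < 0"
proof (cases "p < 1")
  case True
  then show ?thesis using hh_neg_lt1 assms by blast
next
  case False
  then have p1: "p = 1" using assms by simp
  show ?thesis
  proof (cases "q = 1")
    case True then show ?thesis using p1 assms by simp
  next
    case False
    then have q1: "q < 1" using assms by simp
    have "1 \<in> {0..1::real}" by simp
    then obtain d where d: "d > 0" "\<forall>x'\<in>{0..1}. dist x' 1 < d \<longrightarrow> dist (hh x') (hh 1) < - hh 1"
      using hh_cont assms p1 unfolding continuous_on_iff by (metis neg_0_less_iff_less)
    define p' where "p' = max ((q + 1) / 2) (1 - d / 2)"
    have p': "q < p'" "p' < 1" "0 \<le> p'" using q1 d assms unfolding p'_def by (auto simp: less_max_iff_disj le_max_iff_disj)
    have "dist p' 1 < d" using p' d unfolding p'_def dist_real_def by auto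
    then have "dist (hh p') (hh 1) < - hh 1" using d p' by auto
    then have "hh p' < 0" unfolding dist_real_def by auto
    then show ?thesis using hh_neg_lt1[of q p'] p' assms by auto
  qed
qed

end

lemma Ic_split: assumes "I \<in> Ic" shows "split_fun I"
proof
  have I: "\<And>x. x \<ge> 0 \<Longrightarrow> 0 \<le> I x \<and> I x \<le> x"
    and L: "\<And>x y. 0 \<le> y \<Longrightarrow> y \<le> x \<Longrightarrow> 0 \<le> I x - I y \<and> I x - I y \<le> x - y"
    using assms unfolding Ic_def by auto
  show "mono_on {0..} I" by (rule mono_onI) (use L in force)
  show "mono_on {0..} (\<lambda>x. x - I x)" by (rule mono_onI) (use L in force)
  show "I 0 = 0" using I[of 0] by simp
  have "1-lipschitz_on {0..} I"
  proof (rule lipschitz_onI)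
    fix x y :: real assume "x \<in> {0..}" "y \<in> {0..}"
    then show "dist (I x) (I y) \<le> 1 * dist x y"
      using L[of y x] L[of x y] unfolding dist_real_def by (cases "y \<le> x") auto
  qed simp
  then show "continuous_on {0..} I" by (rule lipschitz_on_continuous_on)
qed

lemma layer_fin: "layer (ereal r) x = min x r"
  unfolding layer_def by (simp add: min_def)

lemma layer_inf: "layer \<infinity> x = x"
  unfolding layer_def by simp

lemma layer_Ic: assumes "m \<ge> 0" shows "layer m \<in> Ic"
proof (cases m)
  case (real r)
  then have r: "r \<ge> 0" using assms by simp
  show ?thesis unfolding Ic_def real layer_fin using r by (auto simp: min_def)
next
  case PInf
  then show ?thesis unfolding Ic_def by (simp add: layer_inf)
next
  case MInf
  then show ?thesis using assms by simp
qed

lemma tau_eq: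
  fixes \<phi> :: "real \<Rightarrow> real"
  assumes mono: "mono_on {0..} \<phi>" and cont: "continuous_on {0..} \<phi>" and z: "\<phi> 0 = 0"
    and s: "s \<in> Uset \<phi>" and r: "tau \<phi> s = r"
  shows "s = \<phi> r"
proof (rule ccontr)
  assume ne: "s \<noteq> \<phi> r"
  have r0: "0 \<le> r" using tau_props(1)[OF mono cont z s] r by simp
  have le: "\<phi> r \<le> s" using tau_props(2)[OF mono cont z s] r by simp
  with ne have lt: "\<phi> r < s" by simp
  have "r \<in> {0..}" using r0 by simp
  then obtain d where d: "d > 0" "\<forall>x'\<in>{0..}. dist x' r < d \<longrightarrow> dist (\<phi> x') (\<phi> r) < s - \<phi> r"
    using cont lt unfolding continuous_on_iff by (metis diff_gt_0_iff_gt)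
  define x where "x = r + d / 2"
  have x: "x \<in> {0..}" "dist x r < d" "r < x" using r0 d unfolding x_def dist_real_def by auto
  then have "\<phi> x < s" using d unfolding dist_real_def by force
  moreover have "s < \<phi> x" using tau_props(3)[OF mono cont z s, of x] x r by auto
  ultimately show False by simp
qed

locale prob_setup = dist_setup \<theta> k b for \<theta> k b +
  fixes M :: "'a measure" and X :: "'a \<Rightarrow> real"
  assumes P: "prob_space M" and Xm[measurable]: "X \<in> borel_measurable M"
    and Xnn: "\<forall>\<omega>\<in>space M. X \<omega> \<ge> 0" and Xint: "integrable M X"
begin

interpretation prob_space M by (rule P)

definition "S t = surv M X t"

lemma S_eq: "S t = prob {\<omega>\<in>space M. t < X \<omega>}"
  unfolding S_def surv_def by simp

lemma S_nn: "0 \<le> S t" and S_le1: "S t \<le> 1"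
  unfolding S_eq by auto

lemma S_anti: "t \<le> t' \<Longrightarrow> S t' \<le> S t"
  unfolding S_eq by (intro finite_measure_mono) auto

lemma S_borel[measurable]: "S \<in> borel_measurable borel"
proof -
  have "mono (\<lambda>t. - S t)" by (rule monoI) (use S_anti in force)
  then have "(\<lambda>t. - S t) \<in> borel_measurable borel" by (rule borel_measurable_mono)
  then have "(\<lambda>t. - (- S t)) \<in> borel_measurable borel" by measurable
  then show ?thesis by simp
qed

lemma comp_meas:
  assumes "continuous_on {0..1} g"
  shows "(\<lambda>t. g (S t)) \<in> borel_measurable borel"
proof -
  have g: "g \<in> borel_measurable (restrict_space borel {0..1})"
    by (rule borel_measurable_continuous_on_restrict[OF assms])
  have "S \<in> measurable borel (restrict_space borel {0..1})"
    by (rule measurable_restrict_space2) (auto simp: S_nn S_le1)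
  then show ?thesis using measurable_comp[OF _ g] by (simp add: comp_def)
qed

lemma kt_cont: "continuous_on {0..1} kt"
  unfolding kt_def by (intro continuous_intros kcont)

lemma bt_cont: "continuous_on {0..1} bt"
proof -
  have "continuous_on {0..1} (\<lambda>p. b (1 - p))"
    by (rule continuous_on_compose2[OF bcont]) (auto intro!: continuous_intros)
  then show ?thesis unfolding bt_def by (intro continuous_intros)
qed

lemma surv_phi:
  fixes \<phi> :: "real \<Rightarrow> real"
  assumes mono: "mono_on {0..} \<phi>" and cont: "continuous_on {0..} \<phi>" and z: "\<phi> 0 = 0" and s: "0 < s"
  shows "surv M (\<lambda>\<omega>. \<phi> (X \<omega>)) s = (if s \<in> Uset \<phi> then S (tau \<phi> s) else 0)"
proof (cases "s \<in> Uset \<phi>")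
  case True
  have "{\<omega>\<in>space M. s < \<phi> (X \<omega>)} = {\<omega>\<in>space M. tau \<phi> s < X \<omega>}"
    using tau_props(3)[OF mono cont z True] Xnn by auto
  then show ?thesis using True unfolding surv_def S_def by simp
next
  case False
  have "{\<omega>\<in>space M. s < \<phi> (X \<omega>)} = {}"
    using False s Xnn unfolding Uset_def by auto
  then show ?thesis using False unfolding surv_def by (metis (no_types, lifting) measure_empty)
qed

definition "Tq g \<phi> = (\<integral>\<^sup>+s. ennreal (g (surv M (\<lambda>\<omega>. \<phi> (X \<omega>)) s)) * indicator {0<..} s \<partial>lborel)"

lemma Tq_conv:
  fixes \<phi> :: "real \<Rightarrow> real"
  assumes mono: "mono_on {0..} \<phi>" and cont: "continuous_on {0..} \<phi>" and z: "\<phi> 0 = 0" and g0: "g 0 = 0"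
  shows "Tq g \<phi> = (\<integral>\<^sup>+s. ennreal (g (S (tau \<phi> s))) * indicator (Uset \<phi>) s \<partial>lborel)"
  unfolding Tq_def
proof (rule nn_integral_cong)
  fix s :: real
  show "ennreal (g (surv M (\<lambda>\<omega>. \<phi> (X \<omega>)) s)) * indicator {0<..} s = ennreal (g (S (tau \<phi> s))) * indicator (Uset \<phi>) s"
  proof (cases "0 < s")
    case True
    then show ?thesis using surv_phi[OF mono cont z True] g0 by (auto simp: indicator_def)
  next
    case False
    then have "s \<notin> Uset \<phi>" using Uset_pos by blast
    then show ?thesis using False by (simp add: indicator_def)
  qed
qed

definition "mstar = Inf ((\<lambda>t. ereal t) ` {t. 0 \<le> t \<and> hh (S t) < 0})"

lemma m_nn: "0 \<le> mstar"
  unfolding mstar_def by (rule Inf_greatest) auto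

lemma m_below: assumes "0 \<le> t" "ereal t < mstar" shows "0 \<le> hh (S t)"
proof (rule ccontr)
  assume "\<not> 0 \<le> hh (S t)"
  then have "ereal t \<in> (\<lambda>t. ereal t) ` {t. 0 \<le> t \<and> hh (S t) < 0}" using assms by auto
  then have "mstar \<le> ereal t" unfolding mstar_def by (rule Inf_lower)
  then show False using assms by simp
qed

lemma m_above: assumes "0 \<le> t" "mstar < ereal t" shows "hh (S t) \<le> 0"
proof -
  obtain t' where t': "0 \<le> t'" "hh (S t') < 0" "ereal t' < ereal t"
    using assms(2) unfolding mstar_def Inf_less_iff by auto
  have le: "S t \<le> S t'" using S_anti t' by simp
  show ?thesis
  proof (cases "S t = 0")
    case True then show ?thesis using hh0 by simp
  next
    case False
    then have "0 < S t" using S_nn[of t] by simp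
    then show ?thesis using hh_neg_mono[of "S t" "S t'"] le t' S_le1 by force
  qed
qed

definition "Fm t = ennreal (if ereal t < mstar then kt (S t) else bt (S t))"

lemma Fm_meas[measurable]: "Fm \<in> borel_measurable borel"
proof -
  have [measurable]: "(\<lambda>t. kt (S t)) \<in> borel_measurable borel" "(\<lambda>t. bt (S t)) \<in> borel_measurable borel"
    using comp_meas kt_cont bt_cont by auto
  show ?thesis unfolding Fm_def by measurable
qed

lemma main_ineq:
  assumes I: "I \<in> Ic"
  shows "(\<integral>\<^sup>+t. Fm t * indicator {0..} t \<partial>lborel) \<le> Tq kt I + Tq bt (\<lambda>x. x - I x)"
proof -
  interpret split_fun I by (rule Ic_split[OF I])
  have 1: "(\<integral>\<^sup>+s. Fm (tau I s) * indicator (Uset I) s \<partial>lborel) \<le> Tq kt I"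
    unfolding Tq_conv[where \<phi>=I and g=kt, OF monoI contI I0 kt0]
  proof (rule nn_integral_mono_AE)
    have "AE s in lborel. s \<noteq> I (real_of_ereal mstar)" by (rule AE_lborel_singleton)
    then show "AE s in lborel. Fm (tau I s) * indicator (Uset I) s \<le> ennreal (kt (S (tau I s))) * indicator (Uset I) s"
    proof (rule AE_mp, intro AE_I2 impI)
      fix s assume ne: "s \<noteq> I (real_of_ereal mstar)"
      show "Fm (tau I s) * indicator (Uset I) s \<le> ennreal (kt (S (tau I s))) * indicator (Uset I) s"
      proof (cases "s \<in> Uset I")
        case False then show ?thesis by simp
      next
        case True
        let ?t = "tau I s"
        have t0: "0 \<le> ?t" by (rule tau_props(1)[OF monoI contI I0 True])
        show ?thesis
        proof (cases "ereal ?t < mstar")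
          case True then show ?thesis unfolding Fm_def by simp
        next
          case False
          have "mstar \<noteq> ereal ?t"
          proof
            assume "mstar = ereal ?t"
            then have "real_of_ereal mstar = ?t" by simp
            then have "s = I (real_of_ereal mstar)" using tau_eq[OF monoI contI I0 \<open>s \<in> Uset I\<close>] by simp
            then show False using ne by simp
          qed
          then have "mstar < ereal ?t" using False by simp
          then have "hh (S ?t) \<le> 0" using m_above t0 by simp
          then have "bt (S ?t) \<le> kt (S ?t)" unfolding hh_def by simp
          then show ?thesis using False \<open>s \<in> Uset I\<close> unfolding Fm_def by (simp add: ennreal_leI)
        qed
      qed
    qed
  qed
  have 2: "(\<integral>\<^sup>+s. Fm (tau R s) * indicator (Uset R) s \<partial>lborel) \<le> Tq bt R"
    unfolding Tq_conv[where \<phi>=R and g=bt, OF monoR contR R0 bt0]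
  proof (rule nn_integral_mono)
    fix s
    show "Fm (tau R s) * indicator (Uset R) s \<le> ennreal (bt (S (tau R s))) * indicator (Uset R) s"
    proof (cases "s \<in> Uset R")
      case False then show ?thesis by simp
    next
      case True
      let ?t = "tau R s"
      have t0: "0 \<le> ?t" by (rule tau_props(1)[OF monoR contR R0 True])
      show ?thesis
      proof (cases "ereal ?t < mstar")
        case True
        then have "0 \<le> hh (S ?t)" using m_below t0 by simp
        then have "kt (S ?t) \<le> bt (S ?t)" unfolding hh_def by simp
        then show ?thesis using True \<open>s \<in> Uset R\<close> unfolding Fm_def by (simp add: ennreal_leI)
      next
        case False then show ?thesis unfolding Fm_def by simp
      qed
    qed
  qed
  have "(\<integral>\<^sup>+t. Fm t * indicator {0..} t \<partial>lborel) =
    (\<integral>\<^sup>+s. Fm (tau I s) * indicator (Uset I) s \<partial>lborel) + (\<integral>\<^sup>+s. Fm (tau R s) * indicator (Uset R) s \<partial>lborel)"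
    by (rule Phi_sum[symmetric]) measurable
  also have "\<dots> \<le> Tq kt I + Tq bt R" using 1 2 by (rule add_mono)
  finally show ?thesis .
qed

lemma main_eq:
  "Tq kt (layer mstar) + Tq bt (\<lambda>x. x - layer mstar x) = (\<integral>\<^sup>+t. Fm t * indicator {0..} t \<partial>lborel)"
proof -
  let ?L = "layer mstar"
  interpret split_fun ?L by (rule Ic_split[OF layer_Ic[OF m_nn]])
  have A: "s \<in> Uset ?L \<Longrightarrow> ereal (tau ?L s) < mstar" for s
  proof (cases mstar)
    case (real r)
    assume s: "s \<in> Uset ?L"
    have r0: "0 \<le> r" using m_nn real by simp
    from s obtain x where "x \<ge> 0" "s < ?L x" unfolding Uset_def by auto
    then have "s < ?L r" unfolding real layer_fin by simp
    then have "tau ?L s < r" using tau_props(3)[OF monoI contI I0 s r0] by simp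
    then show ?thesis using real by simp
  next
    case PInf then show ?thesis by simp
  next
    case MInf then show ?thesis using m_nn by simp
  qed
  have B: "s \<in> Uset R \<Longrightarrow> \<not> ereal (tau R s) < mstar" for s
  proof (cases mstar)
    case (real r)
    assume s: "s \<in> Uset R"
    have r0: "0 \<le> r" using m_nn real by simp
    show ?thesis
    proof
      assume "ereal (tau R s) < mstar"
      then have "tau R s < r" using real by simp
      then have "s < R r" using tau_props(3)[OF monoR contR R0 s r0] by simp
      then show False using Uset_pos[OF s] unfolding real layer_fin by simp
    qed
  next
    case PInf
    assume s: "s \<in> Uset R"
    then show ?thesis using PInf unfolding Uset_def by (auto simp: layer_inf)
  next
    case MInf then show ?thesis using m_nn by simp
  qed
  have 1: "Tq kt ?L = (\<integral>\<^sup>+s. Fm (tau ?L s) * indicator (Uset ?L) s \<partial>lborel)"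
    unfolding Tq_conv[where \<phi>="layer mstar" and g=kt, OF monoI contI I0 kt0]
    by (rule nn_integral_cong) (auto simp: Fm_def indicator_def A)
  have 2: "Tq bt R = (\<integral>\<^sup>+s. Fm (tau R s) * indicator (Uset R) s \<partial>lborel)"
    unfolding Tq_conv[where \<phi>=R and g=bt, OF monoR contR R0 bt0]
    by (rule nn_integral_cong) (auto simp: Fm_def indicator_def B)
  show ?thesis unfolding 1 2 by (rule Phi_sum) measurable
qed

end

context prob_setup begin

interpretation prob_space M by (rule P)

lemma surv_anti: "Y \<in> borel_measurable M \<Longrightarrow> t \<le> t' \<Longrightarrow> surv M Y t' \<le> surv M Y t"
  unfolding surv_def by (intro finite_measure_mono) auto

lemma surv_borel[measurable]: assumes [measurable]: "Y \<in> borel_measurable M" shows "surv M Y \<in> borel_measurable borel"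
proof -
  have "mono (\<lambda>t. - surv M Y t)" by (rule monoI) (use surv_anti in force)
  then have "(\<lambda>t. - surv M Y t) \<in> borel_measurable borel" by (rule borel_measurable_mono)
  then have "(\<lambda>t. - (- surv M Y t)) \<in> borel_measurable borel" by measurable
  then show ?thesis by simp
qed

lemma surv_nn: "0 \<le> surv M Y t" and surv_le1: "surv M Y t \<le> 1"
  unfolding surv_def by auto

lemma layer_cake:
  assumes Ym[measurable]: "Y \<in> borel_measurable M" and Ynn: "\<forall>\<omega>\<in>space M. 0 \<le> Y \<omega>" and Yi: "integrable M Y"
  shows "set_integrable lborel {0<..} (surv M Y)" "(\<integral>\<omega>. Y \<omega> \<partial>M) = (LBINT s:{0<..}. surv M Y s)"
proof -
  interpret pair_sigma_finite M lborel ..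
  have "(\<integral>\<^sup>+\<omega>. ennreal (Y \<omega>) \<partial>M) = (\<integral>\<^sup>+\<omega>. (\<integral>\<^sup>+s. indicator {0<..<Y \<omega>} s \<partial>lborel) \<partial>M)"
  proof (rule nn_integral_cong)
    fix \<omega> assume "\<omega> \<in> space M"
    then have "0 \<le> Y \<omega>" using Ynn by auto
    then show "ennreal (Y \<omega>) = (\<integral>\<^sup>+s. indicator {0<..<Y \<omega>} s \<partial>lborel)" by simp
  qed
  also have "\<dots> = (\<integral>\<^sup>+s. (\<integral>\<^sup>+\<omega>. indicator {0<..<Y \<omega>} s \<partial>M) \<partial>lborel)"
  proof (rule Fubini'[symmetric])
    have "(\<lambda>x. indicator {0<..<Y (fst x)} (snd x) :: ennreal) = (\<lambda>x. if 0 < snd x \<and> snd x < Y (fst x) then 1 else 0)"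
      by (auto simp: indicator_def fun_eq_iff)
    moreover have "(\<lambda>x. if 0 < snd x \<and> snd x < Y (fst x) then 1 else 0 :: ennreal) \<in> borel_measurable (M \<Otimes>\<^sub>M lborel)"
      by measurable
    ultimately show "(\<lambda>(x, y). indicator {0<..<Y x} y :: ennreal) \<in> borel_measurable (M \<Otimes>\<^sub>M lborel)"
      by (simp add: case_prod_beta')
  qed
  also have "\<dots> = (\<integral>\<^sup>+s. ennreal (indicator {0<..} s * surv M Y s) \<partial>lborel)"
  proof (rule nn_integral_cong)
    fix s :: real
    have "(\<integral>\<^sup>+\<omega>. indicator {0<..<Y \<omega>} s \<partial>M) = (\<integral>\<^sup>+\<omega>. indicator {\<omega>\<in>space M. 0 < s \<and> s < Y \<omega>} \<omega> \<partial>M)"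
      by (rule nn_integral_cong) (auto simp: indicator_def)
    also have "\<dots> = emeasure M {\<omega>\<in>space M. 0 < s \<and> s < Y \<omega>}" by (rule nn_integral_indicator) measurable
    also have "\<dots> = ennreal (indicator {0<..} s * surv M Y s)"
      unfolding surv_def by (cases "0 < s") (auto simp: emeasure_eq_measure)
    finally show "(\<integral>\<^sup>+\<omega>. indicator {0<..<Y \<omega>} s \<partial>M) = ennreal (indicator {0<..} s * surv M Y s)" .
  qed
  finally have eq: "(\<integral>\<^sup>+\<omega>. ennreal (Y \<omega>) \<partial>M) = (\<integral>\<^sup>+s. ennreal (indicator {0<..} s * surv M Y s) \<partial>lborel)" .
  have Yeq: "(\<integral>\<^sup>+\<omega>. ennreal (Y \<omega>) \<partial>M) = ennreal (\<integral>\<omega>. Y \<omega> \<partial>M)"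
    by (rule nn_integral_eq_integral[OF Yi]) (use Ynn in auto)
  have int: "integrable lborel (\<lambda>s. indicator {0<..} s * surv M Y s)"
    by (rule integrableI_nn_integral_finite[where x="\<integral>\<omega>. Y \<omega> \<partial>M"]) (use eq Yeq surv_nn in auto)
  then show "set_integrable lborel {0<..} (surv M Y)" unfolding set_integrable_def by simp
  have "(LBINT s:{0<..}. surv M Y s) = (\<integral>s. indicator {0<..} s * surv M Y s \<partial>lborel)"
    unfolding set_lebesgue_integral_def by simp
  also have "\<dots> = enn2real (\<integral>\<^sup>+s. ennreal (indicator {0<..} s * surv M Y s) \<partial>lborel)"
    by (rule integral_eq_nn_integral) (auto simp: surv_nn)
  also have "\<dots> = (\<integral>\<omega>. Y \<omega> \<partial>M)" unfolding eq[symmetric] Yeq using Ynn by (simp add: integral_nonneg_AE)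
  finally show "(\<integral>\<omega>. Y \<omega> \<partial>M) = (LBINT s:{0<..}. surv M Y s)" by simp
qed

end

context prob_setup begin

interpretation prob_space M by (rule P)

lemma comp01_meas:
  assumes "continuous_on {0..1} g" and [measurable]: "F \<in> borel_measurable borel" and "\<And>t. 0 \<le> F t \<and> F t \<le> 1"
  shows "(\<lambda>t. g (F t)) \<in> borel_measurable borel"
proof -
  have g: "g \<in> borel_measurable (restrict_space borel {0..1})"
    by (rule borel_measurable_continuous_on_restrict[OF assms(1)])
  have "F \<in> measurable borel (restrict_space borel {0..1})"
    by (rule measurable_restrict_space2) (use assms(3) in auto)
  then show ?thesis using measurable_comp[OF _ g] by (simp add: comp_def)
qed

lemma Ic_props:
  assumes "I \<in> Ic"
  shows "\<And>x. 0 \<le> x \<Longrightarrow> 0 \<le> I x" "\<And>x. 0 \<le> x \<Longrightarrow> I x \<le> x" "continuous_on {0..} I"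
  using assms split_fun.contI[OF Ic_split[OF assms]] unfolding Ic_def by auto

lemma comp_X_meas:
  assumes "continuous_on {0..} \<phi>"
  shows "(\<lambda>\<omega>. \<phi> (X \<omega>)) \<in> borel_measurable M"
proof -
  have g: "\<phi> \<in> borel_measurable (restrict_space borel {0..})"
    by (rule borel_measurable_continuous_on_restrict[OF assms])
  have "X \<in> measurable M (restrict_space borel {0..})"
    by (rule measurable_restrict_space2) (use Xnn in auto)
  then show ?thesis using measurable_comp[OF _ g] by (simp add: comp_def)
qed

lemma IX_meas[measurable]: "I \<in> Ic \<Longrightarrow> (\<lambda>\<omega>. I (X \<omega>)) \<in> borel_measurable M"
  using comp_X_meas Ic_props(3) by blast

lemma IX_int: assumes "I \<in> Ic" shows "integrable M (\<lambda>\<omega>. I (X \<omega>))"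
proof (rule Bochner_Integration.integrable_bound[OF Xint])
  show "(\<lambda>\<omega>. I (X \<omega>)) \<in> borel_measurable M" using assms by measurable
  show "AE x in M. norm (I (X x)) \<le> norm (X x)"
    using Ic_props[OF assms] Xnn by (intro AE_I2) auto
qed

lemma rho_k_eq:
  assumes I: "I \<in> Ic"
  shows "rho k M (\<lambda>\<omega>. I (X \<omega>)) = (LBINT t:{0<..}. k (surv M (\<lambda>\<omega>. I (X \<omega>)) t))"
proof -
  let ?Y = "\<lambda>\<omega>. I (X \<omega>)"
  have "(LBINT t:{..0}. k (surv M ?Y t) - k 1) = (\<integral>(t::real). 0 \<partial>lborel)"
    unfolding set_lebesgue_integral_def
  proof (rule Bochner_Integration.integral_cong_AE)
    have [measurable]: "(\<lambda>t. k (surv M ?Y t)) \<in> borel_measurable borel"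
      by (rule comp01_meas[OF kcont]) (use I surv_nn surv_le1 in auto)
    show "(\<lambda>t. indicator {..0} t *\<^sub>R (k (surv M ?Y t) - k 1)) \<in> borel_measurable lborel"
      by measurable
  next
    show "(\<lambda>t. 0::real) \<in> borel_measurable lborel" by simp
    have "AE t in lborel. t \<noteq> 0" by (rule AE_lborel_singleton)
    then show "AE t in lborel. indicator {..0} t *\<^sub>R (k (surv M ?Y t) - k 1) = 0"
    proof (rule AE_mp, intro AE_I2 impI)
      fix t :: real assume "t \<noteq> 0"
      show "indicator {..0} t *\<^sub>R (k (surv M ?Y t) - k 1) = 0"
      proof (cases "t < 0")
        case True
        have "{\<omega>\<in>space M. t < ?Y \<omega>} = space M"
          using True Ic_props[OF I] Xnn by (auto intro: less_le_trans)
        then have "surv M ?Y t = 1" unfolding surv_def using prob_space by simp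
        then show ?thesis by simp
      next
        case False then show ?thesis using \<open>t \<noteq> 0\<close> by simp
      qed
    qed
  qed
  then show ?thesis unfolding rho_def by simp
qed

end

context prob_setup begin

interpretation prob_space M by (rule P)

lemma premium_eq:
  assumes I: "I \<in> Ic" and fk: "set_integrable lborel {0<..} (\<lambda>t. k (surv M (\<lambda>\<omega>. I (X \<omega>)) t))"
  shows "set_integrable lborel {0<..} (\<lambda>s. kt (surv M (\<lambda>\<omega>. I (X \<omega>)) s))"
    "premium \<theta> k M (\<lambda>\<omega>. I (X \<omega>)) = (LBINT s:{0<..}. kt (surv M (\<lambda>\<omega>. I (X \<omega>)) s))"
proof -
  let ?Y = "\<lambda>\<omega>. I (X \<omega>)"
  have lc: "set_integrable lborel {0<..} (surv M ?Y)" "(\<integral>\<omega>. ?Y \<omega> \<partial>M) = (LBINT s:{0<..}. surv M ?Y s)"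
    using layer_cake[of ?Y] I Ic_props[OF I] Xnn IX_int[OF I] by auto
  have si: "set_integrable lborel {0<..} (\<lambda>s. (1 + \<theta>) * surv M ?Y s)"
    using lc(1) by (rule set_integrable_mult_right)
  have eq: "(\<lambda>s. kt (surv M ?Y s)) = (\<lambda>s. (1 + \<theta>) * surv M ?Y s + k (surv M ?Y s))"
    unfolding kt_def by simp
  show "set_integrable lborel {0<..} (\<lambda>s. kt (surv M ?Y s))"
    unfolding eq using si fk by (rule set_integral_add(1))
  have "(LBINT s:{0<..}. kt (surv M ?Y s)) = (LBINT s:{0<..}. (1 + \<theta>) * surv M ?Y s) + (LBINT s:{0<..}. k (surv M ?Y s))"
    unfolding eq using si fk by (rule set_integral_add(2))
  also have "\<dots> = (1 + \<theta>) * (\<integral>\<omega>. ?Y \<omega> \<partial>M) + rho k M ?Y"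
    using lc(2) rho_k_eq[OF I] by simp
  finally show "premium \<theta> k M ?Y = (LBINT s:{0<..}. kt (surv M ?Y s))"
    unfolding premium_def by simp
qed

definition "Qf I s = prob {\<omega>\<in>space M. s \<le> X \<omega> - I (X \<omega>)}"

lemma wealth_rho:
  assumes I: "I \<in> Ic"
    and fb1: "set_integrable lborel {..0} (\<lambda>t. b (surv M (wealth w \<theta> k M X I) t) - b 1)"
    and fb2: "set_integrable lborel {0<..} (\<lambda>t. b (surv M (wealth w \<theta> k M X I) t))"
  shows "set_integrable lborel {0..} (\<lambda>s. bt (Qf I s))"
    "rho b M (wealth w \<theta> k M X I) = (w - premium \<theta> k M (\<lambda>\<omega>. I (X \<omega>))) - (LBINT s:{0..}. bt (Qf I s))"
proof -
  define c where "c = w - premium \<theta> k M (\<lambda>\<omega>. I (X \<omega>))"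
  define W where "W = wealth w \<theta> k M X I"
  have RX0: "\<And>\<omega>. \<omega> \<in> space M \<Longrightarrow> 0 \<le> X \<omega> - I (X \<omega>)" using Ic_props[OF I] Xnn by auto
  have RXm[measurable]: "(\<lambda>\<omega>. X \<omega> - I (X \<omega>)) \<in> borel_measurable M" using I by measurable
  have Wc: "W \<omega> = c - (X \<omega> - I (X \<omega>))" for \<omega> unfolding W_def wealth_def c_def by simp
  have sW: "surv M W t = 1 - Qf I (c - t)" for t
  proof -
    have "{\<omega>\<in>space M. t < W \<omega>} = space M - {\<omega>\<in>space M. c - t \<le> X \<omega> - I (X \<omega>)}"
      unfolding Wc by auto
    then show ?thesis unfolding surv_def Qf_def by (simp add: prob_compl)
  qed
  define G where "G t = bt (Qf I (c - t))" for t
  have bW: "b (surv M W t) = 1 - G t" for t unfolding sW G_def bt_def by simp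
  have G1: "G t = 1" if "c < t" for t
  proof -
    have "{\<omega>\<in>space M. c - t \<le> X \<omega> - I (X \<omega>)} = space M" using RX0 that by force
    then show ?thesis unfolding G_def Qf_def using bt1 prob_space by simp
  qed
  define F where "F t = indicator {..0} t *\<^sub>R (b (surv M W t) - b 1) + indicator {0<..} t *\<^sub>R b (surv M W t)" for t
  have Fi: "integrable lborel F" unfolding F_def
    using fb1 fb2 unfolding W_def set_integrable_def by (rule Bochner_Integration.integrable_add)
  have rhoF: "rho b M W = (\<integral>t. F t \<partial>lborel)"
    unfolding rho_def F_def set_lebesgue_integral_def
    using fb1 fb2 unfolding W_def set_integrable_def by (simp add: Bochner_Integration.integral_add)
  define D where "D t = (indicator {0<..c} t - indicator {c<..0} t :: real)" for t :: real
  have Di: "integrable lborel D" unfolding D_def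
    by (intro Bochner_Integration.integrable_diff integrable_real_indicator) (cases "0 \<le> c"; simp)+
  have Dint: "(\<integral>t. D t \<partial>lborel) = c"
    unfolding D_def
    by (cases "0 \<le> c") (auto simp: Bochner_Integration.integral_diff)
  define H where "H t = indicator {..c} t * G t" for t :: real
  have FDH: "F t = D t - H t" for t
    unfolding F_def D_def H_def bW using b1 G1[of t]
    by (cases "t \<le> 0"; cases "t \<le> c") (auto simp: indicator_def)
  have Hi: "integrable lborel H"
  proof -
    have "H = (\<lambda>t. D t - F t)" using FDH by (auto simp: fun_eq_iff)
    then show ?thesis using Di Fi by (simp add: Bochner_Integration.integrable_diff)
  qed
  have HF: "(\<integral>t. H t \<partial>lborel) = c - (\<integral>t. F t \<partial>lborel)"
  proof -
    have "H = (\<lambda>t. D t - F t)" using FDH by (auto simp: fun_eq_iff)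
    then show ?thesis using Di Fi Dint by (simp add: Bochner_Integration.integral_diff)
  qed
  have Hsub: "H (c + (-1) * s) = indicator {0..} s * bt (Qf I s)" for s
    unfolding H_def G_def by (simp add: indicator_def)
  have "integrable lborel (\<lambda>s. H (c + (-1) * s))"
    using Hi lborel_integrable_real_affine_iff[of "-1" H c] by simp
  then show "set_integrable lborel {0..} (\<lambda>s. bt (Qf I s))"
    unfolding set_integrable_def Hsub by simp
  have "(\<integral>t. H t \<partial>lborel) = \<bar>-1\<bar> *\<^sub>R (\<integral>s. H (c + (-1) * s) \<partial>lborel)"
    by (rule lborel_integral_real_affine) simp
  also have "\<dots> = (LBINT s:{0..}. bt (Qf I s))"
    unfolding Hsub set_lebesgue_integral_def by simp
  finally show "rho b M (wealth w \<theta> k M X I) = c - (LBINT s:{0..}. bt (Qf I s))"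
    using HF rhoF unfolding W_def by simp
qed

end

context prob_setup begin

interpretation prob_space M by (rule P)

lemma Q_ae:
  assumes I: "I \<in> Ic"
  shows "AE s in lborel. Qf I s = surv M (\<lambda>\<omega>. X \<omega> - I (X \<omega>)) s"
proof -
  let ?Y = "\<lambda>\<omega>. X \<omega> - I (X \<omega>)"
  have Ym[measurable]: "?Y \<in> borel_measurable M" using I by measurable
  interpret D: prob_space "distr M borel ?Y" by (rule prob_space_distr) measurable
  have cnt: "countable {s. measure (distr M borel ?Y) {s} \<noteq> 0}" by (rule D.countable_support)
  show ?thesis
  proof (rule AE_I'[OF countable_imp_null_set_lborel[OF cnt]])
    show "{s \<in> space lborel. \<not> Qf I s = surv M ?Y s} \<subseteq> {s. measure (distr M borel ?Y) {s} \<noteq> 0}"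
    proof safe
      fix s assume ne: "Qf I s \<noteq> surv M ?Y s" and z: "measure (distr M borel ?Y) {s} = 0"
      have "measure (distr M borel ?Y) {s} = prob {\<omega>\<in>space M. ?Y \<omega> = s}"
        by (subst measure_distr) (auto intro!: arg_cong[where f=prob])
      then have z': "prob {\<omega>\<in>space M. ?Y \<omega> = s} = 0" using z by simp
      have "{\<omega>\<in>space M. s \<le> ?Y \<omega>} = {\<omega>\<in>space M. s < ?Y \<omega>} \<union> {\<omega>\<in>space M. ?Y \<omega> = s}" by auto
      then have "Qf I s = prob {\<omega>\<in>space M. s < ?Y \<omega>} + prob {\<omega>\<in>space M. ?Y \<omega> = s}"
        unfolding Qf_def by (simp only:) (rule finite_measure_Union; auto)
      then show False using ne z' unfolding surv_def by simp
    qed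
  qed
qed

lemma Qf_anti: "I \<in> Ic \<Longrightarrow> s \<le> s' \<Longrightarrow> Qf I s' \<le> Qf I s"
  unfolding Qf_def by (intro finite_measure_mono) auto

lemma B_eq:
  assumes I: "I \<in> Ic" and si: "set_integrable lborel {0..} (\<lambda>s. bt (Qf I s))"
  shows "set_integrable lborel {0<..} (\<lambda>s. bt (surv M (\<lambda>\<omega>. X \<omega> - I (X \<omega>)) s))"
    "(LBINT s:{0..}. bt (Qf I s)) = (LBINT s:{0<..}. bt (surv M (\<lambda>\<omega>. X \<omega> - I (X \<omega>)) s))"
proof -
  let ?Y = "\<lambda>\<omega>. X \<omega> - I (X \<omega>)"
  have Ym[measurable]: "?Y \<in> borel_measurable M" using I by measurable
  have m1: "(\<lambda>s. indicator {0..} s *\<^sub>R bt (Qf I s)) \<in> borel_measurable lborel"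
    using si unfolding set_integrable_def by (rule borel_measurable_integrable)
  have [measurable]: "(\<lambda>s. bt (surv M ?Y s)) \<in> borel_measurable borel"
    by (rule comp01_meas[OF bt_cont]) (auto simp: surv_nn surv_le1)
  have m2: "(\<lambda>s. indicator {0<..} s *\<^sub>R bt (surv M ?Y s)) \<in> borel_measurable lborel" by measurable
  have ae: "AE s in lborel. indicator {0..} s *\<^sub>R bt (Qf I s) = indicator {0<..} s *\<^sub>R bt (surv M ?Y s)"
    using Q_ae[OF I] AE_lborel_singleton[of 0]
    by eventually_elim (auto simp: indicator_def)
  show "set_integrable lborel {0<..} (\<lambda>s. bt (surv M ?Y s))"
    using si unfolding set_integrable_def using integrable_cong_AE[OF m1 m2 ae] by simp
  show "(LBINT s:{0..}. bt (Qf I s)) = (LBINT s:{0<..}. bt (surv M ?Y s))"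
    unfolding set_lebesgue_integral_def by (rule Bochner_Integration.integral_cong_AE[OF m1 m2 ae])
qed

lemma Tq_real:
  assumes si: "set_integrable lborel {0<..} (\<lambda>s. g (surv M (\<lambda>\<omega>. \<phi> (X \<omega>)) s))"
    and gnn: "\<And>p. 0 \<le> p \<Longrightarrow> p \<le> 1 \<Longrightarrow> 0 \<le> g p"
  shows "Tq g \<phi> = ennreal (LBINT s:{0<..}. g (surv M (\<lambda>\<omega>. \<phi> (X \<omega>)) s))"
proof -
  let ?f = "\<lambda>s. indicator {0<..} s *\<^sub>R g (surv M (\<lambda>\<omega>. \<phi> (X \<omega>)) s)"
  have "Tq g \<phi> = (\<integral>\<^sup>+s. ennreal (?f s) \<partial>lborel)"
    unfolding Tq_def by (rule nn_integral_cong) (auto simp: indicator_def)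
  also have "\<dots> = ennreal (integral\<^sup>L lborel ?f)"
    by (rule nn_integral_eq_integral) (use si gnn surv_nn surv_le1 in \<open>auto simp: set_integrable_def\<close>)
  finally show ?thesis unfolding set_lebesgue_integral_def .
qed

end

lemma set_int_nn: "(\<And>s. 0 \<le> f s) \<Longrightarrow> 0 \<le> (LBINT s:A. (f s :: real))"
  unfolding set_lebesgue_integral_def by (rule integral_nonneg_AE) (auto simp: indicator_def)

context prob_setup begin

lemma key:
  assumes J: "J \<in> Ic"
    and fk: "set_integrable lborel {0<..} (\<lambda>t. k (surv M (\<lambda>\<omega>. J (X \<omega>)) t))"
    and fb1: "set_integrable lborel {..0} (\<lambda>t. b (surv M (wealth w \<theta> k M X J) t) - b 1)"
    and fb2: "set_integrable lborel {0<..} (\<lambda>t. b (surv M (wealth w \<theta> k M X J) t))"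
  shows "\<exists>A B. 0 \<le> A \<and> 0 \<le> B \<and> rho b M (wealth w \<theta> k M X J) = w - (A + B) \<and>
     Tq kt J + Tq bt (\<lambda>x. x - J x) = ennreal (A + B)"
proof -
  define A where "A = (LBINT s:{0<..}. kt (surv M (\<lambda>\<omega>. J (X \<omega>)) s))"
  define B where "B = (LBINT s:{0<..}. bt (surv M (\<lambda>\<omega>. X \<omega> - J (X \<omega>)) s))"
  have A0: "0 \<le> A" unfolding A_def by (rule set_int_nn) (auto intro!: kt_nn simp: surv_nn surv_le1)
  have B0: "0 \<le> B" unfolding B_def by (rule set_int_nn) (auto intro!: bt_nn simp: surv_nn surv_le1)
  note pe = premium_eq[OF J fk]
  note wr = wealth_rho[OF J fb1 fb2]
  note be = B_eq[OF J wr(1)]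
  have "rho b M (wealth w \<theta> k M X J) = w - (A + B)"
    unfolding wr(2) pe(2) be(2) A_def B_def by simp
  moreover have "Tq kt J = ennreal A" unfolding A_def by (rule Tq_real[OF pe(1) kt_nn])
  moreover have "Tq bt (\<lambda>x. x - J x) = ennreal B" unfolding B_def by (rule Tq_real[OF be(1) bt_nn]) 
  ultimately show ?thesis using A0 B0 by (intro exI[of _ A] exI[of _ B]) (simp add: ennreal_plus)
qed

end

theorem corollary3p3:
  fixes M :: "'a measure" and X :: "'a \<Rightarrow> real"
    and \<theta> w :: real and k b :: "real \<Rightarrow> real"
  assumes "prob_space M"
    and "X \<in> borel_measurable M"
    and "\<forall>\<omega>\<in>space M. X \<omega> \<ge> 0"
    and "integrable M X"
    and "\<theta> > -1"
    and "continuous_on {0..1} k" and "concave_on {0..1} k"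
    and "\<forall>p\<in>{0..1}. k p \<ge> 0" and "k 0 = 0" and "k 1 = 0"
    and "\<exists>b'. continuous_on {0..1} b' \<and>
              (\<forall>p\<in>{0..1}. (b has_real_derivative b' p) (at p within {0..1}))"
    and "strict_mono_on {0..1} b" and "convex_on {0..1} b"
    and "b 0 = 0" and "b 1 = 1"
    and hr: "mono_on {0<..<1} (\<lambda>p. (1 - b (1 - p)) / ((1 + \<theta>) * p + k p))"
    and fin_k: "\<forall>I\<in>Ic. set_integrable lborel {0<..} (\<lambda>t. k (surv M (\<lambda>\<omega>. I (X \<omega>)) t))"
    and fin_b: "\<forall>I\<in>Ic.
        set_integrable lborel {..0} (\<lambda>t. b (surv M (wealth w \<theta> k M X I) t) - b 1) \<and>
        set_integrable lborel {0<..} (\<lambda>t. b (surv M (wealth w \<theta> k M X I) t))"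
  shows "\<exists>m::ereal. m \<ge> 0 \<and> layer m \<in> Ic \<and>
           (\<forall>I\<in>Ic. rho b M (wealth w \<theta> k M X I) \<le> rho b M (wealth w \<theta> k M X (layer m)))"
proof -
  from assms(11) obtain b' where "\<forall>p\<in>{0..1}. (b has_real_derivative b' p) (at p within {0..1})" by blast
  then have bcont: "continuous_on {0..1} b" by (intro DERIV_continuous_on) auto
  interpret prob_setup \<theta> k b M X
    using assms(5,6,8,9,10) bcont assms(12,14,15) hr assms(1-4)
    by (simp add: prob_setup_def dist_setup_def prob_setup_axioms_def)
  have keyI: "\<exists>A B. 0 \<le> A \<and> 0 \<le> B \<and> rho b M (wealth w \<theta> k M X J) = w - (A + B) \<and>
     Tq kt J + Tq bt (\<lambda>x. x - J x) = ennreal (A + B)" if J: "J \<in> Ic" for J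
    using key[OF J fin_k[rule_format, OF J] conjunct1[OF fin_b[rule_format, OF J]] conjunct2[OF fin_b[rule_format, OF J]]] .
  have Lm: "layer mstar \<in> Ic" by (rule layer_Ic[OF m_nn])
  show ?thesis
  proof (intro exI[of _ mstar] conjI ballI m_nn Lm)
    fix I assume I: "I \<in> Ic"
    obtain A B where AB: "0 \<le> A" "0 \<le> B" "rho b M (wealth w \<theta> k M X I) = w - (A + B)"
      "Tq kt I + Tq bt (\<lambda>x. x - I x) = ennreal (A + B)" using keyI[OF I] by blast
    obtain A' B' where AB': "0 \<le> A'" "0 \<le> B'" "rho b M (wealth w \<theta> k M X (layer mstar)) = w - (A' + B')"
      "Tq kt (layer mstar) + Tq bt (\<lambda>x. x - layer mstar x) = ennreal (A' + B')" using keyI[OF Lm] by blast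
    have "ennreal (A' + B') = (\<integral>\<^sup>+t. Fm t * indicator {0..} t \<partial>lborel)"
      using trans[OF AB'(4)[symmetric] main_eq] .
    also have "\<dots> \<le> Tq kt I + Tq bt (\<lambda>x. x - I x)" by (rule main_ineq[OF I])
    also have "\<dots> = ennreal (A + B)" by (rule AB(4))
    finally have "ennreal (A' + B') \<le> ennreal (A + B)" .
    then have "A' + B' \<le> A + B" using AB(1,2) ennreal_le_iff[of "A + B" "A' + B'"] by linarith
    then show "rho b M (wealth w \<theta> k M X I) \<le> rho b M (wealth w \<theta> k M X (layer mstar))"
      using AB(3) AB'(3) by simp
  qed
qed

end
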